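(* An algebra $(S,\sqcup,\backslash)$ with two binary operations is functional (isomorphic to a set of partial functions closed under override and set-theoretic difference, with the operations so interpreted) if and only if it is an od-algebra.
   Context: For sets $X,Y$, $\mathrm{Par}(X,Y)$ is the set of partial functions from $X$ to $Y$, viewed as sets of ordered pairs. For $f,g\in\mathrm{Par}(X,Y)$, override is $f\sqcup g=f\cup(g-f)$, where $g-f$ is the restriction of $g$ to $X\setminus\mathrm{dom}(f)$; $f\backslash g=\{(x,y)\in f:(x,y)\notin g\}$. An algebra $(S,\sqcup,\backslash)$ is functional if it is isomorphic to $(A,\sqcup,\backslash)$ for some $A\subseteq\mathrm{Par}(X,Y)$ closed under $\sqcup$ and $\backslash$. An o-semilattice is an algebra $(L,\cap,\sqcup)$ such that $(L,\cap)$ is a semilattice and, with $x\leq y$ iff $x=x\cap y$, for all $x,y,z$: (i) $x\leq x\sqcup y$; (ii) $(x\cap y)\sqcup(y\cap z)\leq y$; (iii) $x\sqcup y\leq x\sqcup(y\cap(x\sqcup y))$; (iv) $x\cap z\leq(x\cap y)\sqcup z$. It is distributive if $(a\cap d)\sqcup((b\cap d)\cap(c\cap d))=((a\cap d)\sqcup(b\cap d))\cap((a\cap d)\sqcup(c\cap d))$ for all $a,b,c,d$. An ado-semilattice is a distributive o-semilattice in which $\sqcup$ is associative. An od-algebra is an algebra $(S,\sqcup,\backslash)$ such that, defining $a\cap b=a\backslash(a\backslash b)$, $(S,\sqcup,\cap)$ is an ado-semilattice, the element $(a\backslash b)\cap b$ is the same element (denoted $0$) for all $a,b\in S$, and $(a\backslash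 b)\sqcup(a\cap b)=a$ for all $a,b\in S$. *)

theory Defs
  imports Main
begin

definition Par :: "'x set \<Rightarrow> 'y set \<Rightarrow> ('x \<times> 'y) set set" where
  "Par X Y = {f. f \<subseteq> X \<times> Y \<and> (\<forall>x y z. (x, y) \<in> f \<longrightarrow> (x, z) \<in> f \<longrightarrow> y = z)}"

definition restr_minus :: "('x \<times> 'y) set \<Rightarrow> ('x \<times> 'y) set \<Rightarrow> ('x \<times> 'y) set" where
  "restr_minus g f = {(x, y). (x, y) \<in> g \<and> x \<notin> Domain f}"

definition override :: "('x \<times> 'y) set \<Rightarrow> ('x \<times> 'y) set \<Rightarrow> ('x \<times> 'y) set" where
  "override f g = f \<union> restr_minus g f"

definition pdiff :: "('x \<times> 'y) set \<Rightarrow> ('x \<times> 'y) set \<Rightarrow> ('x \<times> 'y) set" where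
  "pdiff f g = {(x, y). (x, y) \<in> f \<and> (x, y) \<notin> g}"

definition functional_in ::
  "'x itself \<Rightarrow> 'y itself \<Rightarrow> ('a \<Rightarrow> 'a \<Rightarrow> 'a) \<Rightarrow> ('a \<Rightarrow> 'a \<Rightarrow> 'a) \<Rightarrow> bool" where
  "functional_in _ _ j d \<longleftrightarrow>
    (\<exists>(X :: 'x set) (Y :: 'y set) A (h :: 'a \<Rightarrow> ('x \<times> 'y) set).
        A \<subseteq> Par X Y
      \<and> (\<forall>f\<in>A. \<forall>g\<in>A. override f g \<in> A \<and> pdiff f g \<in> A)
      \<and> bij_betw h UNIV A
      \<and> (\<forall>a b. h (j a b) = override (h a) (h b))
      \<and> (\<forall>a b. h (d a b) = pdiff (h a) (h b)))"

definition semilattice_op :: "('a \<Rightarrow> 'a \<Rightarrow> 'a) \<Rightarrow> bool" where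
  "semilattice_op m \<longleftrightarrow> (\<forall>x y z. m (m x y) z = m x (m y z))
     \<and> (\<forall>x y. m x y = m y x) \<and> (\<forall>x. m x x = x)"

definition o_semilattice :: "('a \<Rightarrow> 'a \<Rightarrow> 'a) \<Rightarrow> ('a \<Rightarrow> 'a \<Rightarrow> 'a) \<Rightarrow> bool" where
  "o_semilattice m j \<longleftrightarrow> semilattice_op m \<and>
    (let le = (\<lambda>x y. x = m x y) in
      (\<forall>x y. le x (j x y))
    \<and> (\<forall>x y z. le (j (m x y) (m y z)) y)
    \<and> (\<forall>x y. le (j x y) (j x (m y (j x y))))
    \<and> (\<forall>x y z. le (m x z) (j (m x y) z)))"

definition distributive_o :: "('a \<Rightarrow> 'a \<Rightarrow> 'a) \<Rightarrow> ('a \<Rightarrow> 'a \<Rightarrow> 'a) \<Rightarrow> bool" where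
  "distributive_o m j \<longleftrightarrow>
    (\<forall>a b c d. j (m a d) (m (m b d) (m c d)) = m (j (m a d) (m b d)) (j (m a d) (m c d)))"

definition ado_semilattice :: "('a \<Rightarrow> 'a \<Rightarrow> 'a) \<Rightarrow> ('a \<Rightarrow> 'a \<Rightarrow> 'a) \<Rightarrow> bool" where
  "ado_semilattice m j \<longleftrightarrow> o_semilattice m j \<and> distributive_o m j
     \<and> (\<forall>x y z. j (j x y) z = j x (j y z))"

definition od_meet :: "('a \<Rightarrow> 'a \<Rightarrow> 'a) \<Rightarrow> 'a \<Rightarrow> 'a \<Rightarrow> 'a" where
  "od_meet d a b = d a (d a b)"

definition od_algebra :: "('a \<Rightarrow> 'a \<Rightarrow> 'a) \<Rightarrow> ('a \<Rightarrow> 'a \<Rightarrow> 'a) \<Rightarrow> bool" where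
  "od_algebra j d \<longleftrightarrow> ado_semilattice (od_meet d) j
     \<and> (\<exists>z. \<forall>a b. od_meet d (d a b) b = z)
     \<and> (\<forall>a b. j (d a b) (od_meet d a b) = a)"

end

theory Submission
  imports Defs
begin

locale odl =
  fixes j :: "'a \<Rightarrow> 'a \<Rightarrow> 'a" (infixl "\<squnion>" 65) and d :: "'a \<Rightarrow> 'a \<Rightarrow> 'a" (infixl "\<setminus>" 66)
    and m :: "'a \<Rightarrow> 'a \<Rightarrow> 'a" (infixl "\<sqinter>" 70) and z :: 'a
  assumes m_def: "m a b = d a (d a b)"
  and m_assoc: "(x \<sqinter> y) \<sqinter> w = x \<sqinter> (y \<sqinter> w)"
  and m_comm: "x \<sqinter> y = y \<sqinter> x"
  and m_idem: "x \<sqinter> x = x"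
  and o1: "x = x \<sqinter> (x \<squnion> y)"
  and o2: "(x \<sqinter> y) \<squnion> (y \<sqinter> w) = ((x \<sqinter> y) \<squnion> (y \<sqinter> w)) \<sqinter> y"
  and o3: "x \<squnion> y = (x \<squnion> y) \<sqinter> (x \<squnion> (y \<sqinter> (x \<squnion> y)))"
  and o4: "x \<sqinter> w = (x \<sqinter> w) \<sqinter> ((x \<sqinter> y) \<squnion> w)"
  and dist: "(a \<sqinter> e) \<squnion> ((b \<sqinter> e) \<sqinter> (c \<sqinter> e)) = ((a \<sqinter> e) \<squnion> (b \<sqinter> e)) \<sqinter> ((a \<sqinter> e) \<squnion> (c \<sqinter> e))"
  and j_assoc: "(x \<squnion> y) \<squnion> w = x \<squnion> (y \<squnion> w)"
  and zero: "(a \<setminus> b) \<sqinter> b = z"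
  and split: "(a \<setminus> b) \<squnion> (a \<sqinter> b) = a"
begin

definition le (infix "\<preceq>" 50) where "x \<preceq> y \<longleftrightarrow> x \<sqinter> y = x"

lemma leI: "x \<sqinter> y = x \<Longrightarrow> x \<preceq> y" by (simp add: le_def)
lemma leD: "x \<preceq> y \<Longrightarrow> x \<sqinter> y = x" by (simp add: le_def)
lemma leD2: "x \<preceq> y \<Longrightarrow> y \<sqinter> x = x" by (simp add: le_def m_comm)

lemma le_refl: "x \<preceq> x" by (simp add: le_def m_idem)
lemma le_trans: assumes "x \<preceq> y" "y \<preceq> w" shows "x \<preceq> w"
proof -
  have "x \<sqinter> w = (x \<sqinter> y) \<sqinter> w" using leD[OF assms(1)] by simp
  also have "\<dots> = x \<sqinter> (y \<sqinter> w)" by (rule m_assoc)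
  also have "\<dots> = x" using leD[OF assms(1)] leD[OF assms(2)] by simp
  finally show ?thesis by (rule leI)
qed
lemma le_antisym: assumes "x \<preceq> y" "y \<preceq> x" shows "x = y"
  using leD[OF assms(1)] leD[OF assms(2)] m_comm[of x y] by simp
lemma meet_le1: "x \<sqinter> y \<preceq> x"
  by (rule leI) (metis m_assoc m_comm m_idem)
lemma meet_le2: "x \<sqinter> y \<preceq> y" by (rule leI) (simp add: m_assoc m_idem)
lemma meet_glb: assumes "w \<preceq> x" "w \<preceq> y" shows "w \<preceq> x \<sqinter> y"
proof (rule leI)
  have "w \<sqinter> (x \<sqinter> y) = (w \<sqinter> x) \<sqinter> y" by (rule m_assoc[symmetric])
  thus "w \<sqinter> (x \<sqinter> y) = w" using leD[OF assms(1)] leD[OF assms(2)] by simp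
qed
lemma le_meet_iff: "w \<preceq> x \<sqinter> y \<longleftrightarrow> w \<preceq> x \<and> w \<preceq> y"
  using meet_glb le_trans[OF _ meet_le1] le_trans[OF _ meet_le2] by blast
lemma le_meetI1: "x \<preceq> w \<Longrightarrow> x \<sqinter> y \<preceq> w" using le_trans[OF meet_le1] by blast
lemma le_meetI2: "y \<preceq> w \<Longrightarrow> x \<sqinter> y \<preceq> w" using le_trans[OF meet_le2] by blast
lemma meet_mono: "x \<preceq> x' \<Longrightarrow> y \<preceq> y' \<Longrightarrow> x \<sqinter> y \<preceq> x' \<sqinter> y'"
  by (meson le_meetI1 le_meetI2 meet_glb)

lemma diff_le: "a \<setminus> b \<preceq> a"
  by (rule leI) (metis m_comm o1 split)
lemma z_le: "z \<preceq> a"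
proof (rule leI)
  have "z \<sqinter> a = ((a \<setminus> a) \<sqinter> a) \<sqinter> a" by (simp add: zero)
  also have "\<dots> = (a \<setminus> a) \<sqinter> a" by (simp add: m_assoc m_idem)
  finally show "z \<sqinter> a = z" by (simp add: zero)
qed
lemma z_meet[simp]: "a \<sqinter> z = z" "z \<sqinter> a = z" using leD[OF z_le] leD2[OF z_le] by auto
lemma le_z: "a \<preceq> z \<Longrightarrow> a = z" by (rule le_antisym[OF _ z_le])
lemma ub1: "x \<preceq> x \<squnion> y" by (rule leI) (metis o1)
lemma lub: assumes "p \<preceq> r" "q \<preceq> r" shows "p \<squnion> q \<preceq> r"
  using o2[of p r q] leD[OF assms(1)] leD2[OF assms(2)] by (simp add: le_def)
lemma ub2: assumes "p \<preceq> c" "q \<preceq> c" shows "q \<preceq> p \<squnion> q"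
  using o4[of c q p] leD2[OF assms(1)] leD2[OF assms(2)] by (simp add: le_def)
lemma jcomm: assumes "p \<preceq> c" "q \<preceq> c" shows "p \<squnion> q = q \<squnion> p"
  by (rule le_antisym[OF lub[OF ub2[OF assms(2,1)] ub1] lub[OF ub2[OF assms] ub1]])
lemma jidem[simp]: "x \<squnion> x = x" by (rule le_antisym[OF lub[OF le_refl le_refl] ub1])
lemma join_le_abs: assumes "p \<preceq> q" shows "p \<squnion> q = q"
  by (rule le_antisym[OF lub[OF assms le_refl] ub2[OF assms le_refl]])
lemma join_le_abs2: assumes "p \<preceq> q" shows "q \<squnion> p = q"
  using jcomm[OF le_refl assms] join_le_abs[OF assms] by simp
lemma jz[simp]: "z \<squnion> x = x" "x \<squnion> z = x"
  using join_le_abs[OF z_le] join_le_abs2[OF z_le] by simp_all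
lemma o4': assumes "x \<preceq> X" shows "X \<sqinter> w \<preceq> x \<squnion> w"
  using o4[of X w x] leD2[OF assms] by (simp add: le_def)
lemma o3': "x \<squnion> (y \<sqinter> (x \<squnion> y)) = x \<squnion> y"
  by (rule le_antisym[OF lub[OF ub1 meet_le2]]) (metis o3 le_def)
lemma lub_iff: assumes "p \<preceq> c" "q \<preceq> c" shows "(p \<squnion> q \<preceq> r \<longleftrightarrow> p \<preceq> r \<and> q \<preceq> r)"
  using le_trans[OF ub1[of p q]] le_trans[OF ub2[OF assms]] lub by blast

lemma dist_loc: assumes "A \<preceq> c" "B \<preceq> c" "C \<preceq> c" shows "A \<squnion> (B \<sqinter> C) = (A \<squnion> B) \<sqinter> (A \<squnion> C)"
  using dist[of A c B C] leD[OF assms(1)] leD[OF assms(2)] leD[OF assms(3)] by simp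

lemma DD: assumes "w \<preceq> c" "p \<preceq> c" "q \<preceq> c" shows "w \<sqinter> (p \<squnion> q) = (w \<sqinter> p) \<squnion> (w \<sqinter> q)"
proof -
  have wp: "w \<sqinter> p \<preceq> c" by (rule le_trans[OF meet_le1 assms(1)])
  have 1: "(w \<sqinter> p) \<squnion> (w \<sqinter> q) = ((w \<sqinter> p) \<squnion> w) \<sqinter> ((w \<sqinter> p) \<squnion> q)"
    using dist_loc[OF wp assms(1) assms(3)] .
  have 2: "(w \<sqinter> p) \<squnion> w = w" using join_le_abs[OF meet_le1] .
  have 3: "(w \<sqinter> p) \<squnion> q = q \<squnion> (w \<sqinter> p)" using jcomm[OF wp assms(3)] .
  have 4: "q \<squnion> (w \<sqinter> p) = (q \<squnion> w) \<sqinter> (q \<squnion> p)" using dist_loc[OF assms(3) assms(1) assms(2)] .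
  have 5: "q \<squnion> p = p \<squnion> q" using jcomm[OF assms(3) assms(2)] .
  have 6: "w \<sqinter> (q \<squnion> w) = w" using leD[OF ub2[OF assms(3) assms(1)]] .
  have "(w \<sqinter> p) \<squnion> (w \<sqinter> q) = w \<sqinter> ((q \<squnion> w) \<sqinter> (p \<squnion> q))"
    using 1 2 3 4 5 by simp
  also have "\<dots> = (w \<sqinter> (q \<squnion> w)) \<sqinter> (p \<squnion> q)" by (rule m_assoc[symmetric])
  also have "\<dots> = w \<sqinter> (p \<squnion> q)" using 6 by simp
  finally show ?thesis by (rule sym)
qed

lemma compl1: assumes "s \<preceq> c" shows "(c \<setminus> s) \<squnion> s = c"
  using split[of c s] m_comm[of c s] leD[OF assms] by simp
lemma compl2: assumes "s \<preceq> c" shows "s \<squnion> (c \<setminus> s) = c"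
  using compl1[OF assms] jcomm[OF assms diff_le] by simp
lemma compl0: "(c \<setminus> s) \<sqinter> s = z" by (rule zero)

lemma compl_least: assumes "s \<preceq> c" "y \<preceq> c" "s \<squnion> y = c" shows "c \<setminus> s \<preceq> y"
proof (rule leI)
  have "c \<setminus> s = (c \<setminus> s) \<sqinter> (s \<squnion> y)" using leD[OF diff_le[of c s]] unfolding assms(3) by simp
  also have "\<dots> = ((c \<setminus> s) \<sqinter> s) \<squnion> ((c \<setminus> s) \<sqinter> y)" using DD[OF diff_le assms(1,2)] .
  also have "\<dots> = (c \<setminus> s) \<sqinter> y" by (simp add: zero)
  finally show "(c \<setminus> s) \<sqinter> y = c \<setminus> s" by (rule sym)
qed

lemma K1: "(x \<squnion> y) \<setminus> x \<preceq> y"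
proof -
  let ?c = "x \<squnion> y"
  have "?c \<setminus> x \<preceq> y \<sqinter> ?c"
    by (rule compl_least[OF ub1 meet_le2 o3'])
  then show ?thesis using le_meet_iff by blast
qed

lemma mono2: assumes "y \<preceq> y'" shows "x \<squnion> y \<preceq> x \<squnion> y'"
proof -
  let ?c = "x \<squnion> y" let ?oo = "?c \<setminus> x"
  have c: "x \<squnion> ?oo = ?c" using compl2[OF ub1] .
  have ol: "?oo \<preceq> y'" using K1 assms le_trans by blast
  have "?c \<sqinter> y' \<preceq> x \<squnion> y'" by (rule o4'[OF ub1])
  hence "?oo \<preceq> x \<squnion> y'" using ol diff_le le_meet_iff le_trans by blast
  hence "x \<squnion> ?oo \<preceq> x \<squnion> y'" by (rule lub[OF ub1])
  with c show ?thesis by simp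
qed


lemma C1: assumes "u \<preceq> a \<squnion> b" "u \<sqinter> a = z" "u \<sqinter> b = z" shows "u = z"
proof -
  let ?c = "a \<squnion> b" let ?b = "b \<sqinter> ?c"
  have c: "a \<squnion> ?b = ?c" by (rule o3')
  have "u = u \<sqinter> ?c" using leD[OF assms(1)] by simp
  also have "\<dots> = u \<sqinter> (a \<squnion> ?b)" using c by simp
  also have "\<dots> = (u \<sqinter> a) \<squnion> (u \<sqinter> ?b)" by (rule DD[OF assms(1) ub1 meet_le2])
  also have "u \<sqinter> ?b = z"
  proof -
    have "u \<sqinter> ?b \<preceq> u \<sqinter> b" by (rule meet_mono[OF le_refl meet_le1])
    thus ?thesis using assms(3) le_z by simp
  qed
  finally show ?thesis using assms(2) by simp
qed

lemma le_diff_z: assumes "s \<setminus> t = z" shows "s \<preceq> t"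
proof -
  have "s = z \<squnion> (s \<sqinter> t)" using split[of s t] assms by simp
  hence "s = s \<sqinter> t" by simp
  thus ?thesis using meet_le2[of s t] by simp
qed

lemma meet_zD: assumes "x \<preceq> y" "y \<sqinter> w = z" shows "x \<sqinter> w = z"
  using meet_mono[OF assms(1) le_refl[of w]] assms(2) le_z by simp

lemma dom_le: assumes "p \<preceq> c" "r \<preceq> c" "p \<squnion> r = p" shows "r \<preceq> p"
  using ub2[OF assms(1,2)] assms(3) by simp

lemma RH1: "t \<squnion> (c \<setminus> ((t \<squnion> c) \<setminus> t)) = t"
proof -
  define oo where "oo = (t \<squnion> c) \<setminus> t"
  define r where "r = c \<setminus> oo"
  define w where "w = (t \<squnion> r) \<setminus> t"
  have oc: "oo \<preceq> c" unfolding oo_def by (rule K1)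
  have to: "t \<squnion> oo = t \<squnion> c" unfolding oo_def by (rule compl2[OF ub1])
  have otc: "oo \<preceq> t \<squnion> oo" using to diff_le[of "t \<squnion> c" t] unfolding oo_def by simp
  have ro: "r \<squnion> oo = c" unfolding r_def by (rule compl1[OF oc])
  have rz: "r \<sqinter> oo = z" unfolding r_def by (rule zero)
  have wr: "w \<preceq> r" unfolding w_def by (rule K1)
  have wt: "w \<sqinter> t = z" unfolding w_def by (rule zero)
  have "(t \<squnion> r) \<squnion> oo = t \<squnion> oo" using j_assoc[of t r oo] ro to by simp
  hence "t \<squnion> r \<preceq> t \<squnion> oo" using ub1[of "t \<squnion> r" oo] by simp
  hence w1: "w \<preceq> t \<squnion> oo" using le_trans[OF diff_le] unfolding w_def by blast
  have "w = w \<sqinter> (t \<squnion> oo)" using leD[OF w1] by simp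
  also have "\<dots> = (w \<sqinter> t) \<squnion> (w \<sqinter> oo)" by (rule DD[OF w1 ub1 otc])
  also have "\<dots> = w \<sqinter> oo" using wt by simp
  finally have "w \<preceq> oo" using meet_le2[of w oo] by simp
  hence "w \<preceq> r \<sqinter> oo" using wr meet_glb by blast
  hence wz: "w = z" using rz le_z by simp
  have "t \<squnion> w = t \<squnion> r" unfolding w_def by (rule compl2[OF ub1])
  thus ?thesis using wz unfolding r_def oo_def by simp
qed

lemma LA: assumes "p \<squnion> t = p" "q \<squnion> t = q" "p \<sqinter> q = z" "p \<preceq> c0" "q \<preceq> c0" shows "t = z"
proof -
  define c where "c = p \<squnion> q"
  have pc: "p \<preceq> c" unfolding c_def by (rule ub1)
  have qc: "q \<preceq> c" unfolding c_def by (rule ub2[OF assms(4,5)])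
  define oo where "oo = (t \<squnion> c) \<setminus> t"
  define r where "r = c \<setminus> oo"
  have rc: "r \<preceq> c" unfolding r_def by (rule diff_le)
  have tr: "t \<squnion> r = t" unfolding r_def oo_def by (rule RH1)
  have "p \<squnion> r = p" using j_assoc[of p t r] tr assms(1) by simp
  hence rp: "r \<preceq> p" by (rule dom_le[OF pc rc])
  have "q \<squnion> r = q" using j_assoc[of q t r] tr assms(2) by simp
  hence rq: "r \<preceq> q" by (rule dom_le[OF qc rc])
  have "r = z" using meet_glb[OF rp rq] assms(3) le_z by simp
  hence "c = c \<sqinter> oo" using split[of c oo] unfolding r_def by simp
  hence co: "c \<preceq> oo" by (simp add: le_def)
  have ct: "c \<sqinter> t = z" using meet_zD[OF co] zero[of "t \<squnion> c" t] unfolding oo_def by simp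
  have "oo \<preceq> t \<squnion> c" unfolding oo_def by (rule diff_le)
  hence c1: "c \<preceq> t \<squnion> c" using le_trans[OF co] by blast
  have "t \<preceq> c \<squnion> t" by (rule ub2[OF c1 ub1])
  moreover have "c \<squnion> t = c" unfolding c_def using j_assoc[of p q t] assms(2) by simp
  ultimately have "t \<preceq> c" by simp
  thus ?thesis using ct m_comm[of c t] leD[of t c] by simp
qed

definition pf :: "'a set \<Rightarrow> bool" where
  "pf V \<longleftrightarrow> V \<noteq> {} \<and> (\<forall>a b. a \<in> V \<longrightarrow> a \<preceq> b \<longrightarrow> b \<in> V) \<and> (\<forall>a b. a \<in> V \<longrightarrow> b \<in> V \<longrightarrow> a \<sqinter> b \<in> V)
     \<and> z \<notin> V \<and> (\<forall>a b. a \<squnion> b \<in> V \<longrightarrow> a \<in> V \<or> b \<in> V)"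

definition TT :: "'a set \<Rightarrow> 'a \<Rightarrow> bool" where "TT V a \<longleftrightarrow> (\<forall>v\<in>V. a \<squnion> v \<in> V)"
definition UU :: "'a set \<Rightarrow> 'a set" where "UU V = {a. a \<in> V \<or> \<not> TT V a}"
definition val :: "'a set \<Rightarrow> 'a \<Rightarrow> 'a set" where "val V s = {t. s \<sqinter> t \<in> UU V}"

context fixes V assumes V: "pf V"
begin
lemma pf_ne: "\<exists>v. v \<in> V" using V unfolding pf_def by blast
lemma pf_up: "a \<in> V \<Longrightarrow> a \<preceq> b \<Longrightarrow> b \<in> V" using V unfolding pf_def by blast
lemma pf_meet: "a \<in> V \<Longrightarrow> b \<in> V \<Longrightarrow> a \<sqinter> b \<in> V" using V unfolding pf_def by blast
lemma pf_z: "z \<notin> V" using V unfolding pf_def by blast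
lemma pf_prime: "a \<squnion> b \<in> V \<Longrightarrow> a \<in> V \<or> b \<in> V" using V unfolding pf_def by blast
lemma pf_meetD1: "a \<sqinter> b \<in> V \<Longrightarrow> a \<in> V" using pf_up meet_le1 by blast
lemma pf_meetD2: "a \<sqinter> b \<in> V \<Longrightarrow> b \<in> V" using pf_up meet_le2 by blast

lemma T_ex: assumes "v \<in> V" "a \<squnion> v \<in> V" shows "TT V a"
  unfolding TT_def
proof
  fix w assume "w \<in> V"
  hence "(a \<squnion> v) \<sqinter> w \<in> V" using pf_meet assms by blast
  moreover have "(a \<squnion> v) \<sqinter> w \<preceq> a \<squnion> w" by (rule o4'[OF ub1])
  ultimately show "a \<squnion> w \<in> V" using pf_up by blast
qed
lemma T_D: "TT V a \<Longrightarrow> v \<in> V \<Longrightarrow> a \<squnion> v \<in> V" unfolding TT_def by blast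
lemma T_in: "a \<in> V \<Longrightarrow> TT V a" using T_ex pf_up ub1 by blast
lemma T_join: assumes "TT V a" "TT V b" shows "TT V (a \<squnion> b)"
proof -
  obtain v where v: "v \<in> V" using pf_ne by blast
  have "b \<squnion> v \<in> V" using T_D[OF assms(2) v] .
  hence "a \<squnion> (b \<squnion> v) \<in> V" using T_D[OF assms(1)] by blast
  thus ?thesis using T_ex[OF v] j_assoc by simp
qed
lemma T_down: assumes "a \<preceq> b" "TT V b" shows "TT V a"
proof -
  obtain v where v: "v \<in> V" using pf_ne by blast
  have "b \<squnion> v \<in> V" using T_D[OF assms(2) v] .
  hence "(b \<squnion> v) \<sqinter> v \<in> V" using pf_meet v by blast
  moreover have "(b \<squnion> v) \<sqinter> v \<preceq> a \<squnion> v" by (rule o4'[OF le_trans[OF assms(1) ub1]])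
  ultimately show ?thesis using pf_up T_ex[OF v] by blast
qed

lemma U_up: assumes "a \<in> UU V" "a \<preceq> b" shows "b \<in> UU V"
  using assms pf_up T_down unfolding UU_def by blast
lemma U_z: "z \<notin> UU V"
proof -
  obtain v where v: "v \<in> V" using pf_ne by blast
  have "TT V z" using T_ex[OF v] v by simp
  thus ?thesis using pf_z unfolding UU_def by blast
qed
lemma V_U: "a \<in> V \<Longrightarrow> a \<in> UU V" unfolding UU_def by blast
lemma U_join: "a \<squnion> b \<in> UU V \<longleftrightarrow> a \<in> UU V \<or> b \<in> UU V"
proof -
  obtain v where v: "v \<in> V" using pf_ne by blast
  have jv: "(a \<squnion> b) \<squnion> v = a \<squnion> (b \<squnion> v)" by (rule j_assoc)
  show ?thesis
  proof
    assume h: "a \<squnion> b \<in> UU V"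
    show "a \<in> UU V \<or> b \<in> UU V"
    proof (rule ccontr)
      assume "\<not> ?thesis"
      hence na: "a \<notin> V" "TT V a" and nb: "b \<notin> V" "TT V b" unfolding UU_def by auto
      have "TT V (a \<squnion> b)" using T_join na nb by blast
      moreover have "a \<squnion> b \<notin> V" using pf_prime na nb by blast
      ultimately show False using h unfolding UU_def by blast
    qed
  next
    assume h: "a \<in> UU V \<or> b \<in> UU V"
    show "a \<squnion> b \<in> UU V"
    proof (cases "a \<in> V")
      case True thus ?thesis using V_U pf_up ub1 by blast
    next
      case aV: False
      show ?thesis
      proof (cases "TT V a")
        case False
        show ?thesis
        proof (rule ccontr)
          assume "a \<squnion> b \<notin> UU V"
          hence "TT V (a \<squnion> b)" unfolding UU_def by blast
          hence "a \<squnion> (b \<squnion> v) \<in> V" using T_D v jv by metis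
          hence "b \<squnion> v \<in> V" using pf_prime aV by blast
          hence "TT V a" using T_ex \<open>a \<squnion> (b \<squnion> v) \<in> V\<close> by blast
          thus False using False by blast
        qed
      next
        case Ta: True
        hence bU: "b \<in> UU V" using h aV unfolding UU_def by blast
        show ?thesis
        proof (cases "b \<in> V")
          case True thus ?thesis using T_D[OF Ta] V_U by blast
        next
          case False
          hence nTb: "\<not> TT V b" using bU unfolding UU_def by blast
          show ?thesis
          proof (rule ccontr)
            assume "a \<squnion> b \<notin> UU V"
            hence "TT V (a \<squnion> b)" unfolding UU_def by blast
            hence "a \<squnion> (b \<squnion> v) \<in> V" using T_D v jv by metis
            hence "b \<squnion> v \<in> V" using pf_prime aV by blast
            thus False using T_ex[OF v] nTb by blast
          qed
        qed
      qed
    qed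
  qed
qed

lemma U_low: assumes "s \<in> V" "u \<preceq> s" "u \<in> UU V" shows "u \<in> V"
proof (rule ccontr)
  assume nu: "u \<notin> V"
  obtain v where v: "v \<in> V" using pf_ne by blast
  have "s \<sqinter> v \<in> V" using pf_meet assms(1) v by blast
  moreover have "s \<sqinter> v \<preceq> u \<squnion> v" by (rule o4'[OF assms(2)])
  ultimately have "TT V u" using pf_up T_ex[OF v] by blast
  thus False using nu assms(3) unfolding UU_def by blast
qed

lemma DISJ: assumes "p \<preceq> c" "q \<preceq> c" "p \<sqinter> q = z" "\<not> TT V p" "\<not> TT V q" shows False
proof -
  obtain v where v: "v \<in> V" using pf_ne by blast
  have pv: "p \<squnion> v \<notin> V" using T_ex[OF v] assms(4) by blast
  have qv: "q \<squnion> v \<notin> V" using T_ex[OF v] assms(5) by blast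
  have r: "v \<setminus> (x \<squnion> v) \<in> V" if "x \<squnion> v \<notin> V" for x
  proof -
    have "(v \<setminus> (x \<squnion> v)) \<squnion> (v \<sqinter> (x \<squnion> v)) \<in> V" using split v by simp
    moreover have "v \<sqinter> (x \<squnion> v) \<notin> V" using pf_meetD2 that by blast
    ultimately show ?thesis using pf_prime by blast
  qed
  define t where "t = (v \<setminus> (p \<squnion> v)) \<sqinter> (v \<setminus> (q \<squnion> v))"
  have tV: "t \<in> V" unfolding t_def using r pv qv pf_meet by blast
  have tv: "t \<preceq> v" unfolding t_def by (rule le_meetI1[OF diff_le])
  have key: "x \<squnion> t = x" if "t \<sqinter> (x \<squnion> v) = z" for x
  proof -
    have "(x \<squnion> t) \<sqinter> t \<preceq> (x \<squnion> v) \<sqinter> t" by (rule meet_mono[OF mono2[OF tv] le_refl])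
    hence "(x \<squnion> t) \<sqinter> t \<preceq> z" using that m_comm[of t "x \<squnion> v"] by simp
    hence xz: "(x \<squnion> t) \<sqinter> t = z" by (rule le_z)
    have "(x \<squnion> t) \<setminus> x \<preceq> (x \<squnion> t) \<sqinter> t" by (rule meet_glb[OF diff_le K1])
    hence "(x \<squnion> t) \<setminus> x \<preceq> z" using xz by simp
    hence "(x \<squnion> t) \<setminus> x = z" by (rule le_z)
    moreover have "x \<squnion> ((x \<squnion> t) \<setminus> x) = x \<squnion> t" by (rule compl2[OF ub1])
    ultimately show ?thesis by simp
  qed
  have "t \<sqinter> (p \<squnion> v) = z" unfolding t_def
    using meet_zD[OF meet_le1 zero[of v "p \<squnion> v"]] .
  hence tp: "p \<squnion> t = p" by (rule key)
  have "t \<sqinter> (q \<squnion> v) = z" unfolding t_def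
    using meet_zD[OF meet_le2 zero[of v "q \<squnion> v"]] .
  hence tq: "q \<squnion> t = q" by (rule key)
  have "t = z" by (rule LA[OF tp tq assms(3) assms(1,2)])
  thus False using tV pf_z by simp
qed

lemma U_meet: assumes "a \<preceq> c" "b \<preceq> c" "a \<in> UU V" "b \<in> UU V" shows "a \<sqinter> b \<in> UU V"
proof (cases "a \<in> V \<and> b \<in> V")
  case True thus ?thesis using pf_meet V_U by blast
next
  case False
  have mixed: False if "x \<preceq> c" "y \<preceq> c" "x \<in> V" "y \<notin> V" "y \<in> UU V" for x y
  proof -
    have "x \<preceq> y \<squnion> x" by (rule ub2[OF that(2,1)])
    hence "y \<squnion> x \<in> V" using pf_up that(3) by blast
    hence "TT V y" using T_ex that(3) by blast
    thus False using that(4,5) unfolding UU_def by blast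
  qed
  have aV: "a \<notin> V"
  proof
    assume aV: "a \<in> V"
    hence "b \<notin> V" using False by blast
    thus False using mixed[OF assms(1) assms(2) aV _ assms(4)] by blast
  qed
  have bV: "b \<notin> V"
  proof
    assume bV: "b \<in> V"
    hence "a \<notin> V" using False by blast
    thus False using mixed[OF assms(2) assms(1) bV _ assms(3)] by blast
  qed
  have nTa: "\<not> TT V a" using aV assms(3) unfolding UU_def by blast
  have nTb: "\<not> TT V b" using bV assms(4) unfolding UU_def by blast
  show ?thesis
  proof (rule ccontr)
    assume "a \<sqinter> b \<notin> UU V"
    hence Tab: "TT V (a \<sqinter> b)" unfolding UU_def by blast
    have "\<not> TT V (a \<setminus> b)"
    proof
      assume "TT V (a \<setminus> b)"
      hence "TT V ((a \<setminus> b) \<squnion> (a \<sqinter> b))" using T_join Tab by blast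
      thus False using split nTa by simp
    qed
    moreover have "\<not> TT V (b \<setminus> a)"
    proof
      assume "TT V (b \<setminus> a)"
      hence "TT V ((b \<setminus> a) \<squnion> (b \<sqinter> a))" using T_join Tab m_comm[of a b] by simp
      thus False using split nTb by simp
    qed
    moreover have "(a \<setminus> b) \<sqinter> (b \<setminus> a) = z"
    proof -
      have "b \<sqinter> (a \<setminus> b) = z" using zero[of a b] m_comm[of b "a \<setminus> b"] by simp
      hence "(b \<setminus> a) \<sqinter> (a \<setminus> b) = z" by (rule meet_zD[OF diff_le])
      thus ?thesis using m_comm[of "b \<setminus> a" "a \<setminus> b"] by simp
    qed
    ultimately show False
      using DISJ[OF le_trans[OF diff_le assms(1)] le_trans[OF diff_le assms(2)]] by blast
  qed
qed

lemma Va: assumes "s \<in> UU V" shows "val V (s \<squnion> t) = val V s"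
proof (rule set_eqI)
  fix x
  show "x \<in> val V (s \<squnion> t) \<longleftrightarrow> x \<in> val V s"
    unfolding val_def mem_Collect_eq
  proof
    assume h: "(s \<squnion> t) \<sqinter> x \<in> UU V"
    have "s \<sqinter> ((s \<squnion> t) \<sqinter> x) \<in> UU V" by (rule U_meet[OF ub1 meet_le1 assms h])
    moreover have "s \<sqinter> ((s \<squnion> t) \<sqinter> x) \<preceq> s \<sqinter> x" by (rule meet_mono[OF le_refl meet_le2])
    ultimately show "s \<sqinter> x \<in> UU V" using U_up by blast
  next
    assume "s \<sqinter> x \<in> UU V"
    thus "(s \<squnion> t) \<sqinter> x \<in> UU V" using U_up meet_mono[OF ub1 le_refl] by blast
  qed
qed

lemma Vb: assumes "s \<notin> UU V" shows "val V (s \<squnion> t) = val V t"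
proof (rule set_eqI)
  fix w
  show "w \<in> val V (s \<squnion> t) \<longleftrightarrow> w \<in> val V t"
    unfolding val_def mem_Collect_eq
  proof
    assume h: "(s \<squnion> t) \<sqinter> w \<in> UU V"
    define c where "c = s \<squnion> t"
    define oo where "oo = c \<setminus> s"
    have ot: "oo \<preceq> t" unfolding oo_def c_def by (rule K1)
    have so: "s \<squnion> oo = c" unfolding oo_def c_def by (rule compl2[OF ub1])
    have "c \<sqinter> w = (c \<sqinter> w) \<sqinter> (s \<squnion> oo)" using so leD[OF meet_le1[of c w]] by simp
    also have "\<dots> = ((c \<sqinter> w) \<sqinter> s) \<squnion> ((c \<sqinter> w) \<sqinter> oo)"
    proof -
      have sc: "s \<preceq> c" unfolding c_def by (rule ub1)
      have occ: "oo \<preceq> c" unfolding oo_def by (rule diff_le)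
      show ?thesis by (rule DD[OF meet_le1 sc occ])
    qed
    finally have "((c \<sqinter> w) \<sqinter> s) \<squnion> ((c \<sqinter> w) \<sqinter> oo) \<in> UU V" using h unfolding c_def by simp
    hence "(c \<sqinter> w) \<sqinter> s \<in> UU V \<or> (c \<sqinter> w) \<sqinter> oo \<in> UU V" using U_join by blast
    moreover have "(c \<sqinter> w) \<sqinter> s \<notin> UU V" using U_up[OF _ meet_le2] assms by blast
    ultimately have "(c \<sqinter> w) \<sqinter> oo \<in> UU V" by blast
    moreover have "(c \<sqinter> w) \<sqinter> oo \<preceq> t \<sqinter> w"
      by (rule meet_glb[OF le_meetI2[OF ot] le_meetI1[OF meet_le2]])
    ultimately show "t \<sqinter> w \<in> UU V" using U_up by blast
  next
    assume h: "t \<sqinter> w \<in> UU V"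
    hence "s \<squnion> (t \<sqinter> w) \<in> UU V" using U_join by blast
    define e where "e = (s \<squnion> (t \<sqinter> w)) \<setminus> s"
    have "s \<squnion> e = s \<squnion> (t \<sqinter> w)" unfolding e_def by (rule compl2[OF ub1])
    hence "e \<in> UU V" using U_join assms \<open>s \<squnion> (t \<sqinter> w) \<in> UU V\<close> by metis
    moreover have "e \<preceq> (s \<squnion> t) \<sqinter> w"
    proof (rule meet_glb)
      show "e \<preceq> s \<squnion> t" unfolding e_def by (rule le_trans[OF diff_le mono2[OF meet_le1]])
      show "e \<preceq> w" unfolding e_def by (rule le_trans[OF K1 meet_le2])
    qed
    ultimately show "(s \<squnion> t) \<sqinter> w \<in> UU V" using U_up by blast
  qed
qed

lemma val_same: assumes "s \<sqinter> t \<in> UU V" shows "val V s = val V t"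
proof -
  have *: "b \<sqinter> w \<in> UU V" if "a \<sqinter> b \<in> UU V" "a \<sqinter> w \<in> UU V" for a b w
  proof -
    have "(a \<sqinter> b) \<sqinter> (a \<sqinter> w) \<in> UU V" by (rule U_meet[OF meet_le1 meet_le1 that])
    moreover have "(a \<sqinter> b) \<sqinter> (a \<sqinter> w) \<preceq> b \<sqinter> w" by (rule meet_mono[OF meet_le2 meet_le2])
    ultimately show ?thesis using U_up by blast
  qed
  show ?thesis unfolding val_def using *[of s t] *[of t s] assms m_comm[of s t] by auto
qed

lemma Vc: "s \<setminus> t \<in> UU V \<longleftrightarrow> s \<in> UU V \<and> \<not> (t \<in> UU V \<and> val V t = val V s)"
proof
  assume h: "s \<setminus> t \<in> UU V"
  have sU: "s \<in> UU V" using U_up[OF h diff_le] .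
  moreover have "\<not> (t \<in> UU V \<and> val V t = val V s)"
  proof
    assume "t \<in> UU V \<and> val V t = val V s"
    hence "s \<in> val V t" using sU m_idem[of s] unfolding val_def by auto
    hence "t \<sqinter> s \<in> UU V" unfolding val_def by simp
    hence "s \<sqinter> t \<in> UU V" using m_comm by simp
    hence "(s \<setminus> t) \<sqinter> (s \<sqinter> t) \<in> UU V" by (rule U_meet[OF diff_le meet_le1 h])
    moreover have "(s \<setminus> t) \<sqinter> (s \<sqinter> t) = z"
    proof -
      have "t \<sqinter> (s \<setminus> t) = z" using zero[of s t] m_comm by metis
      hence "(s \<sqinter> t) \<sqinter> (s \<setminus> t) = z" by (rule meet_zD[OF meet_le2])
      thus ?thesis using m_comm by metis
    qed
    ultimately show False using U_z by simp
  qed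
  ultimately show "s \<in> UU V \<and> \<not> (t \<in> UU V \<and> val V t = val V s)" by blast
next
  assume h: "s \<in> UU V \<and> \<not> (t \<in> UU V \<and> val V t = val V s)"
  have "(s \<setminus> t) \<squnion> (s \<sqinter> t) \<in> UU V" using h split by simp
  hence "s \<setminus> t \<in> UU V \<or> s \<sqinter> t \<in> UU V" using U_join by blast
  moreover have "s \<sqinter> t \<notin> UU V"
  proof
    assume st: "s \<sqinter> t \<in> UU V"
    hence "t \<in> UU V" using U_up meet_le2 by blast
    moreover have "val V s = val V t" by (rule val_same[OF st])
    ultimately show False using h by simp
  qed
  ultimately show "s \<setminus> t \<in> UU V" by blast
qed

lemma Vd: assumes "s \<setminus> t \<in> UU V" shows "val V (s \<setminus> t) = val V s"
proof -
  have "s \<sqinter> (s \<setminus> t) = s \<setminus> t" using leD2[OF diff_le] .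
  hence "s \<sqinter> (s \<setminus> t) \<in> UU V" using assms by simp
  thus ?thesis using val_same by (metis m_comm)
qed

end


lemma pf_exists: assumes "a \<noteq> z" shows "\<exists>V. pf V \<and> a \<in> V"
proof -
  define A where "A = {F. (\<forall>x y. x \<in> F \<longrightarrow> x \<preceq> y \<longrightarrow> y \<in> F) \<and> (\<forall>x y. x \<in> F \<longrightarrow> y \<in> F \<longrightarrow> x \<sqinter> y \<in> F) \<and> z \<notin> F \<and> a \<in> F}"
  have upA: "{b. a \<preceq> b} \<in> A"
    unfolding A_def using le_trans meet_glb le_z assms le_refl by blast
  have "\<forall>C\<in>chains A. \<exists>U\<in>A. \<forall>X\<in>C. X \<subseteq> U"
  proof
    fix C assume C: "C \<in> chains A"
    show "\<exists>U\<in>A. \<forall>X\<in>C. X \<subseteq> U"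
    proof (cases "C = {}")
      case True thus ?thesis using upA by blast
    next
      case False
      have CA: "C \<subseteq> A" using chainsD2[OF C] .
      have "\<Union>C \<in> A" unfolding A_def
      proof (intro CollectI conjI allI impI)
        fix x y assume "x \<in> \<Union>C" "x \<preceq> y" thus "y \<in> \<Union>C" using CA unfolding A_def by blast
      next
        fix x y assume x: "x \<in> \<Union>C" and y: "y \<in> \<Union>C"
        then obtain X Y where X: "X \<in> C" "x \<in> X" and Y: "Y \<in> C" "y \<in> Y" by blast
        have "X \<subseteq> Y \<or> Y \<subseteq> X" using chainsD[OF C X(1) Y(1)] .
        thus "x \<sqinter> y \<in> \<Union>C" using X Y CA unfolding A_def by blast
      next
        show "z \<notin> \<Union>C" using CA unfolding A_def by blast
      next
        show "a \<in> \<Union>C" using CA False unfolding A_def by blast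
      qed
      thus ?thesis by blast
    qed
  qed
  from Zorn_Lemma2[OF this] obtain M where MA: "M \<in> A" and Mmax: "\<forall>X\<in>A. M \<subseteq> X \<longrightarrow> X = M" by blast
  have Mup: "x \<in> M \<Longrightarrow> x \<preceq> y \<Longrightarrow> y \<in> M" for x y using MA unfolding A_def by blast
  have Mmeet: "x \<in> M \<Longrightarrow> y \<in> M \<Longrightarrow> x \<sqinter> y \<in> M" for x y using MA unfolding A_def by blast
  have Mz: "z \<notin> M" and Ma: "a \<in> M" using MA unfolding A_def by blast+
  have ext: "\<exists>mm\<in>M. mm \<sqinter> x = z" if xM: "x \<notin> M" for x
  proof (rule ccontr)
    assume nz: "\<not> (\<exists>mm\<in>M. mm \<sqinter> x = z)"
    define F where "F = {b. \<exists>mm\<in>M. mm \<sqinter> x \<preceq> b}"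
    have "F \<in> A" unfolding A_def
    proof (intro CollectI conjI allI impI)
      fix u v assume "u \<in> F" "u \<preceq> v" thus "v \<in> F" unfolding F_def using le_trans by blast
    next
      fix u v assume "u \<in> F" "v \<in> F"
      then obtain m1 m2 where m: "m1 \<in> M" "m1 \<sqinter> x \<preceq> u" "m2 \<in> M" "m2 \<sqinter> x \<preceq> v" unfolding F_def by blast
      have "(m1 \<sqinter> m2) \<sqinter> x \<preceq> u \<sqinter> v"
      proof (rule meet_glb)
        show "(m1 \<sqinter> m2) \<sqinter> x \<preceq> u" by (rule le_trans[OF meet_mono[OF meet_le1 le_refl] m(2)])
        show "(m1 \<sqinter> m2) \<sqinter> x \<preceq> v" by (rule le_trans[OF meet_mono[OF meet_le2 le_refl] m(4)])
      qed
      thus "u \<sqinter> v \<in> F" unfolding F_def using Mmeet[OF m(1) m(3)] by blast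
    next
      show "z \<notin> F" unfolding F_def using nz le_z by blast
    next
      show "a \<in> F" unfolding F_def using Ma meet_le1 by blast
    qed
    moreover have "M \<subseteq> F" unfolding F_def using meet_le1 by blast
    ultimately have "F = M" using Mmax by blast
    moreover have "x \<in> F" unfolding F_def using Ma meet_le2 by blast
    ultimately show False using xM by simp
  qed
  have "pf M" unfolding pf_def
  proof (intro conjI allI impI)
    show "M \<noteq> {}" using Ma by blast
  next
    fix x y show "x \<in> M \<Longrightarrow> x \<preceq> y \<Longrightarrow> y \<in> M" by (rule Mup)
  next
    fix x y show "x \<in> M \<Longrightarrow> y \<in> M \<Longrightarrow> x \<sqinter> y \<in> M" by (rule Mmeet)
  next
    show "z \<notin> M" by (rule Mz)
  next
    fix a1 a2 assume h: "a1 \<squnion> a2 \<in> M"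
    show "a1 \<in> M \<or> a2 \<in> M"
    proof (rule ccontr)
      assume "\<not> (a1 \<in> M \<or> a2 \<in> M)"
      then obtain m1 m2 where m: "m1 \<in> M" "m1 \<sqinter> a1 = z" "m2 \<in> M" "m2 \<sqinter> a2 = z" using ext by blast
      define u where "u = (m1 \<sqinter> m2) \<sqinter> (a1 \<squnion> a2)"
      have uM: "u \<in> M" unfolding u_def using Mmeet m h by blast
      have "u \<sqinter> a1 = z"
        using meet_zD[OF le_meetI1[OF meet_le1] m(2), of "m2" "a1 \<squnion> a2"] unfolding u_def
        by (metis m_assoc m_comm)
      moreover have "u \<sqinter> a2 = z"
        using meet_zD[OF le_meetI1[OF meet_le2] m(4), of "m1" "a1 \<squnion> a2"] unfolding u_def
        by (metis m_assoc m_comm)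
      moreover have "u \<preceq> a1 \<squnion> a2" unfolding u_def by (rule meet_le2)
      ultimately have "u = z" using C1 by blast
      thus False using uM Mz by simp
    qed
  qed
  thus ?thesis using Ma by blast
qed

lemma diff_z_eq: assumes "s \<noteq> t" shows "s \<setminus> t \<noteq> z \<or> t \<setminus> s \<noteq> z"
proof (rule ccontr)
  assume "\<not> (s \<setminus> t \<noteq> z \<or> t \<setminus> s \<noteq> z)"
  hence "s \<setminus> t = z" "t \<setminus> s = z" by simp_all
  hence "s = t" by (rule le_antisym[OF le_diff_z le_diff_z])
  thus False using assms by simp
qed

definition W :: "'a \<times> 'a \<Rightarrow> 'a set" where "W p = (SOME V. pf V \<and> fst p \<setminus> snd p \<in> V)"
definition GG :: "('a \<times> 'a) set" where "GG = {p. \<exists>V. pf V \<and> fst p \<setminus> snd p \<in> V}"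
definition enc :: "'a \<times> 'a \<Rightarrow> 'a \<Rightarrow> 'a" where
  "enc p s = (SOME t. t \<in> UU (W p) \<and> val (W p) t = val (W p) s)"
definition rep :: "'a \<Rightarrow> (('a \<times> 'a) \<times> 'a) set" where
  "rep s = {(p, y). p \<in> GG \<and> s \<in> UU (W p) \<and> y = enc p s}"

lemma W_pf: assumes "p \<in> GG" shows "pf (W p)" "fst p \<setminus> snd p \<in> W p"
proof -
  have "\<exists>V. pf V \<and> fst p \<setminus> snd p \<in> V" using assms unfolding GG_def by blast
  hence "pf (W p) \<and> fst p \<setminus> snd p \<in> W p" unfolding W_def by (rule someI_ex)
  thus "pf (W p)" "fst p \<setminus> snd p \<in> W p" by blast+
qed

lemma enc_prop: assumes "s \<in> UU (W p)" shows "enc p s \<in> UU (W p) \<and> val (W p) (enc p s) = val (W p) s"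
  unfolding enc_def by (rule someI[of _ s]) (use assms in blast)

lemma enc_eq: assumes "s \<in> UU (W p)" "t \<in> UU (W p)"
  shows "enc p s = enc p t \<longleftrightarrow> val (W p) s = val (W p) t"
proof
  assume "enc p s = enc p t" thus "val (W p) s = val (W p) t" using enc_prop[OF assms(1)] enc_prop[OF assms(2)] by metis
next
  assume "val (W p) s = val (W p) t" thus "enc p s = enc p t" unfolding enc_def by simp
qed

lemma rep_join: "rep (s \<squnion> t) = override (rep s) (rep t)"
proof (rule set_eqI)
  fix x :: "('a \<times> 'a) \<times> 'a"
  obtain p y where x: "x = (p, y)" by (cases x)
  show "x \<in> rep (s \<squnion> t) \<longleftrightarrow> x \<in> override (rep s) (rep t)"
  proof (cases "p \<in> GG")
    case False thus ?thesis unfolding x override_def restr_minus_def rep_def by auto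
  next
    case True
    note V = W_pf(1)[OF True]
    show ?thesis
    proof (cases "s \<in> UU (W p)")
      case sU: True
      have jU: "s \<squnion> t \<in> UU (W p)" using U_join[OF V] sU by blast
      have "enc p (s \<squnion> t) = enc p s" using enc_eq[OF jU sU] Va[OF V sU] by blast
      thus ?thesis unfolding x override_def restr_minus_def rep_def using True sU jU by auto
    next
      case sU: False
      have jU: "s \<squnion> t \<in> UU (W p) \<longleftrightarrow> t \<in> UU (W p)" using U_join[OF V] sU by blast
      have "t \<in> UU (W p) \<Longrightarrow> enc p (s \<squnion> t) = enc p t" using enc_eq[of "s \<squnion> t" p t] jU Vb[OF V sU] by blast
      thus ?thesis unfolding x override_def restr_minus_def rep_def using True sU jU by auto
    qed
  qed
qed

lemma rep_diff: "rep (s \<setminus> t) = pdiff (rep s) (rep t)"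
proof (rule set_eqI)
  fix x :: "('a \<times> 'a) \<times> 'a"
  obtain p y where x: "x = (p, y)" by (cases x)
  show "x \<in> rep (s \<setminus> t) \<longleftrightarrow> x \<in> pdiff (rep s) (rep t)"
  proof (cases "p \<in> GG")
    case False thus ?thesis unfolding x pdiff_def rep_def by auto
  next
    case True
    note V = W_pf(1)[OF True]
    have c: "s \<setminus> t \<in> UU (W p) \<longleftrightarrow> s \<in> UU (W p) \<and> \<not> (t \<in> UU (W p) \<and> enc p t = enc p s)"
    proof (cases "s \<in> UU (W p) \<and> t \<in> UU (W p)")
      case True
      hence "enc p t = enc p s \<longleftrightarrow> val (W p) t = val (W p) s" using enc_eq[of t p s] by blast
      thus ?thesis using Vc[OF V, of s t] by simp
    next
      case False
      thus ?thesis using Vc[OF V, of s t] by blast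
    qed
    have e: "enc p (s \<setminus> t) = enc p s" if h: "s \<setminus> t \<in> UU (W p)"
    proof -
      have sU: "s \<in> UU (W p)" using c h by blast
      show ?thesis using enc_eq[OF h sU] Vd[OF V h] by blast
    qed
    show ?thesis
    proof
      assume "x \<in> rep (s \<setminus> t)"
      hence h: "s \<setminus> t \<in> UU (W p)" "y = enc p (s \<setminus> t)" unfolding x rep_def by auto
      thus "x \<in> pdiff (rep s) (rep t)" unfolding x pdiff_def rep_def using True c e[OF h(1)] by auto
    next
      assume "x \<in> pdiff (rep s) (rep t)"
      hence h: "s \<in> UU (W p)" "y = enc p s" "\<not> (t \<in> UU (W p) \<and> y = enc p t)" unfolding x pdiff_def rep_def using True by auto
      hence "s \<setminus> t \<in> UU (W p)" using c by auto
      thus "x \<in> rep (s \<setminus> t)" unfolding x rep_def using True h e by auto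
    qed
  qed
qed

lemma rep_sep: assumes "s \<setminus> t \<noteq> z" shows "rep s \<noteq> rep t"
proof
  assume eq: "rep s = rep t"
  obtain V0 where "pf V0" "s \<setminus> t \<in> V0" using pf_exists[OF assms] by blast
  hence pG: "(s, t) \<in> GG" unfolding GG_def by auto
  define p where "p = (s, t)"
  have pG': "p \<in> GG" using pG unfolding p_def .
  note V = W_pf(1)[OF pG']
  have dV: "s \<setminus> t \<in> W p" using W_pf(2)[OF pG'] unfolding p_def by simp
  have sV: "s \<in> W p" using pf_up[OF V dV diff_le] .
  have sU: "s \<in> UU (W p)" using V_U[OF V sV] .
  have "(p, enc p s) \<in> rep s" unfolding rep_def using pG' sU by simp
  hence "(p, enc p s) \<in> rep t" using eq by simp
  hence tU: "t \<in> UU (W p)" and "enc p s = enc p t" unfolding rep_def by auto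
  hence "val (W p) s = val (W p) t" using enc_eq[OF sU tU] by simp
  moreover have "s \<in> val (W p) s" unfolding val_def using sU m_idem by simp
  ultimately have "t \<sqinter> s \<in> UU (W p)" unfolding val_def by simp
  hence "t \<sqinter> s \<in> W p" using U_low[OF V sV meet_le2] by blast
  hence "t \<in> W p" using pf_meetD1[OF V] by blast
  hence "(s \<setminus> t) \<sqinter> t \<in> W p" using pf_meet[OF V dV] by blast
  thus False using zero pf_z[OF V] by simp
qed

lemma rep_inj: "inj rep"
proof (rule injI)
  fix s t assume eq: "rep s = rep t"
  show "s = t"
  proof (rule ccontr)
    assume "s \<noteq> t"
    hence "s \<setminus> t \<noteq> z \<or> t \<setminus> s \<noteq> z" by (rule diff_z_eq)
    thus False using rep_sep[of s t] rep_sep[of t s] eq by auto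
  qed
qed

lemma rep_par: "rep s \<in> Par UNIV UNIV"
  unfolding Par_def rep_def by auto

end

definition fnl :: "('x \<times> 'y) set \<Rightarrow> bool" where
  "fnl f \<longleftrightarrow> (\<forall>x y w. (x, y) \<in> f \<longrightarrow> (x, w) \<in> f \<longrightarrow> y = w)"

lemma pdiff_pdiff: "pdiff f (pdiff f g) = f \<inter> g"
  unfolding pdiff_def by auto

lemma fwd:
  fixes h :: "'a \<Rightarrow> ('x \<times> 'y) set" and j d :: "'a \<Rightarrow> 'a \<Rightarrow> 'a"
  assumes inj: "inj h" and fn: "\<And>a. fnl (h a)"
    and hj: "\<And>a b. h (j a b) = override (h a) (h b)"
    and hd: "\<And>a b. h (d a b) = pdiff (h a) (h b)"
  shows "od_algebra j d"
proof -
  have eqI: "a = b" if "h a = h b" for a b using inj that by (rule injD)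
  have hm: "h (od_meet d a b) = h a \<inter> h b" for a b unfolding od_meet_def hd pdiff_pdiff ..
  have fnD: "y = w" if "(x, y) \<in> h a" "(x, w) \<in> h a" for x y w a using fn[of a] that unfolding fnl_def by blast
  have semi: "semilattice_op (od_meet d)"
    unfolding semilattice_op_def by (intro conjI allI; rule eqI; simp add: hm; blast)
  have os: "o_semilattice (od_meet d) j"
    unfolding o_semilattice_def Let_def
  proof (intro conjI allI semi)
    fix x y show "x = od_meet d x (j x y)" by (rule eqI) (auto simp: hm hj override_def)
  next
    fix x y w show "j (od_meet d x y) (od_meet d y w) = od_meet d (j (od_meet d x y) (od_meet d y w)) y"
      by (rule eqI) (auto simp: hm hj override_def restr_minus_def)
  next
    fix x y show "j x y = od_meet d (j x y) (j x (od_meet d y (j x y)))"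
      by (rule eqI) (auto simp: hm hj override_def restr_minus_def)
  next
    fix x y w show "od_meet d x w = od_meet d (od_meet d x w) (j (od_meet d x y) w)"
      by (rule eqI) (auto simp: hm hj override_def restr_minus_def dest: fnD)
  qed
  have di: "distributive_o (od_meet d) j"
    unfolding distributive_o_def
    by (intro allI, rule eqI) (auto simp: hm hj override_def restr_minus_def)
  have ja: "\<forall>x y w. j (j x y) w = j x (j y w)"
    by (intro allI, rule eqI) (auto simp: hj override_def restr_minus_def)
  obtain a0 :: 'a where True by blast
  have zz: "\<exists>z. \<forall>a b. od_meet d (d a b) b = z"
    by (rule exI[of _ "d a0 a0"], intro allI, rule eqI) (auto simp: hm hd pdiff_def)
  have sp: "\<forall>a b. j (d a b) (od_meet d a b) = a"
    by (intro allI, rule eqI) (auto simp: hm hj hd override_def restr_minus_def pdiff_def dest: fnD)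
  show ?thesis unfolding od_algebra_def ado_semilattice_def using os di ja zz sp by blast
qed

theorem proposition5p2:
  fixes j d :: "'a \<Rightarrow> 'a \<Rightarrow> 'a"
  shows "(functional_in TYPE('x) TYPE('y) j d \<longrightarrow> od_algebra j d)
       \<and> (od_algebra j d \<longrightarrow> functional_in TYPE('a \<times> 'a) TYPE('a) j d)"
proof (intro conjI impI)
  assume "functional_in TYPE('x) TYPE('y) j d"
  then obtain X :: "'x set" and Y :: "'y set" and A and h :: "'a \<Rightarrow> ('x \<times> 'y) set"
    where AP: "A \<subseteq> Par X Y" and b: "bij_betw h UNIV A"
      and hj: "\<forall>a b. h (j a b) = override (h a) (h b)" and hd: "\<forall>a b. h (d a b) = pdiff (h a) (h b)"
    unfolding functional_in_def by blast
  have inj: "inj h" using b unfolding bij_betw_def by blast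
  have fn: "fnl (h a)" for a
  proof -
    have "h a \<in> A" using b unfolding bij_betw_def by blast
    hence "h a \<in> Par X Y" using AP by blast
    thus ?thesis unfolding Par_def fnl_def by blast
  qed
  show "od_algebra j d" by (rule fwd[OF inj fn]) (use hj hd in blast)+
next
  assume O: "od_algebra j d"
  obtain z0 where z0: "\<forall>a b. od_meet d (d a b) b = z0" using O unfolding od_algebra_def by blast
  have ado: "ado_semilattice (od_meet d) j" using O unfolding od_algebra_def by blast
  have sp: "\<forall>a b. j (d a b) (od_meet d a b) = a" using O unfolding od_algebra_def by blast
  have os: "o_semilattice (od_meet d) j" and di: "distributive_o (od_meet d) j"
    and ja: "\<forall>x y w. j (j x y) w = j x (j y w)" using ado unfolding ado_semilattice_def by blast+
  have se: "semilattice_op (od_meet d)" using os unfolding o_semilattice_def by blast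
  interpret L: odl j d "od_meet d" z0
  proof (unfold_locales)
    fix a b show "od_meet d a b = d a (d a b)" by (rule od_meet_def)
  next
    fix x y w show "od_meet d (od_meet d x y) w = od_meet d x (od_meet d y w)" using se unfolding semilattice_op_def by blast
  next
    fix x y show "od_meet d x y = od_meet d y x" using se unfolding semilattice_op_def by blast
  next
    fix x show "od_meet d x x = x" using se unfolding semilattice_op_def by blast
  next
    fix x y show "x = od_meet d x (j x y)" using os unfolding o_semilattice_def Let_def by blast
  next
    fix x y w show "j (od_meet d x y) (od_meet d y w) = od_meet d (j (od_meet d x y) (od_meet d y w)) y"
      using os unfolding o_semilattice_def Let_def by blast
  next
    fix x y show "j x y = od_meet d (j x y) (j x (od_meet d y (j x y)))" using os unfolding o_semilattice_def Let_def by blast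
  next
    fix x y w show "od_meet d x w = od_meet d (od_meet d x w) (j (od_meet d x y) w)"
      using os unfolding o_semilattice_def Let_def by blast
  next
    fix a e b c show "j (od_meet d a e) (od_meet d (od_meet d b e) (od_meet d c e)) =
      od_meet d (j (od_meet d a e) (od_meet d b e)) (j (od_meet d a e) (od_meet d c e))"
      using di unfolding distributive_o_def by blast
  next
    fix x y w show "j (j x y) w = j x (j y w)" using ja by blast
  next
    fix a b show "od_meet d (d a b) b = z0" using z0 by blast
  next
    fix a b show "j (d a b) (od_meet d a b) = a" using sp by blast
  qed
  show "functional_in TYPE('a \<times> 'a) TYPE('a) j d"
    unfolding functional_in_def
  proof (intro exI conjI)
    show "range L.rep \<subseteq> Par (UNIV :: ('a \<times> 'a) set) (UNIV :: 'a set)" using L.rep_par by blast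
    show "\<forall>f\<in>range L.rep. \<forall>g\<in>range L.rep. override f g \<in> range L.rep \<and> pdiff f g \<in> range L.rep"
    proof (intro ballI conjI)
      fix f g assume "f \<in> range L.rep" "g \<in> range L.rep"
      then obtain a b where ab: "f = L.rep a" "g = L.rep b" by blast
      show "override f g \<in> range L.rep" unfolding ab L.rep_join[symmetric] by (rule rangeI)
      show "pdiff f g \<in> range L.rep" unfolding ab L.rep_diff[symmetric] by (rule rangeI)
    qed
    show "bij_betw L.rep UNIV (range L.rep)" using L.rep_inj by (simp add: bij_betw_def)
    show "\<forall>a b. L.rep (j a b) = override (L.rep a) (L.rep b)" using L.rep_join by blast
    show "\<forall>a b. L.rep (d a b) = pdiff (L.rep a) (L.rep b)" using L.rep_diff by blast
  qed
qed

end
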